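(* Let $n$ be even and $F_4(X)=X^{2^n-2}$ on $\mathbb{F}_{2^n}$. For $a,b\in\mathbb{F}_{2^n}^*$, $\mathrm{FBCT}_{F_4}(a,b)=2^n$ if $a=b$; $=4$ if $(a/b)^2+a/b+1=0$; and $=0$ otherwise.
   Context: For $F:\mathbb{F}_{2^n}\to\mathbb{F}_{2^n}$ and $a,b\in\mathbb{F}_{2^n}$, $\mathrm{FBCT}_F(a,b)=|\{X\in\mathbb{F}_{2^n}: F(X+a+b)+F(X+b)+F(X+a)+F(X)=0\}|$. *)

theory Defs
  imports Main
begin

definition FBCT :: "('a::{field,finite} \<Rightarrow> 'a) \<Rightarrow> 'a \<Rightarrow> 'a \<Rightarrow> nat" where
  "FBCT F a b = card {X. F (X + a + b) + F (X + b) + F (X + a) + F X = 0}"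

end

theory Submission
  imports Defs
begin

lemma char2_aux:
  fixes n :: nat
  assumes "card (UNIV :: 'a::{field,finite} set) = 2 ^ n"
  shows "(1::'a) + 1 = 0" and "n \<noteq> 0"
proof -
  have "(\<Sum>y\<in>UNIV. y + (1::'a)) = (\<Sum>y\<in>UNIV. y)"
    by (rule sum.reindex_bij_witness[where i="\<lambda>y. y - 1" and j="\<lambda>y. y+1"]) auto
  hence "of_nat (card (UNIV::'a set)) = (0::'a)"
    by (simp add: sum.distrib)
  hence h: "(2::'a) ^ n = 0" using assms by simp
  thus "n \<noteq> 0" by (cases n) auto
  with h show "(1::'a) + 1 = 0" by simp
qed

lemma fermat_aux:
  fixes n :: nat and x :: "'a::{field,finite}"
  assumes "card (UNIV :: 'a set) = 2 ^ n" and "x \<noteq> 0"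
  shows "x ^ (2 ^ n - 1) = 1"
proof -
  have "(\<Prod>y\<in>UNIV-{0}. x * y) = (\<Prod>y\<in>UNIV-{0}. y)"
    by (rule prod.reindex_bij_witness[where i="\<lambda>y. y / x" and j="\<lambda>y. x*y"]) (use assms in auto)
  hence "x ^ card (UNIV - {0::'a}) * (\<Prod>y\<in>UNIV-{0}. y) = (\<Prod>y\<in>UNIV-{0}. y)"
    by (simp add: prod.distrib)
  moreover have "(\<Prod>y\<in>UNIV-{0::'a}. y) \<noteq> 0" by simp
  moreover have "card (UNIV - {0::'a}) = 2 ^ n - 1" using assms by (simp add: card_Diff_singleton)
  ultimately show ?thesis by simp
qed

theorem mainTheorem13:
  fixes a b :: "'a::{field,finite}" and n :: nat
  assumes "card (UNIV :: 'a set) = 2 ^ n" and "even n"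
    and "a \<noteq> 0" and "b \<noteq> 0"
  shows "FBCT (\<lambda>X. X ^ (2 ^ n - 2)) a b =
           (if a = b then 2 ^ n
            else if (a / b) ^ 2 + a / b + 1 = 0 then 4
            else 0)"
proof -
  have c2: "(1::'a) + 1 = 0" and n0: "n \<noteq> 0" using char2_aux[OF assms(1)] by auto
  have n2: "n \<ge> 2" using n0 assms(2) by presburger
  have xx: "x + x = 0" for x :: 'a
  proof -
    have "x + x = x * (1 + 1)" by (simp add: algebra_simps)
    thus ?thesis using c2 by simp
  qed
  have xxy: "x + (x + y) = y" for x y :: 'a
    by (metis add.assoc add_0 xx)
  have F: "X ^ (2 ^ n - 2) = inverse X" for X :: 'a
  proof (cases "X = 0")
    case True
    have "2 ^ n - 2 \<noteq> (0::nat)"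
    proof -
      have "(2::nat) ^ 2 \<le> 2 ^ n" using n2 by (rule power_increasing) simp
      thus ?thesis by simp
    qed
    then show ?thesis using True by simp
  next
    case False
    have "(2::nat) ^ 1 \<le> 2 ^ n" using n2 by (intro power_increasing) simp_all
    hence "2 ^ n - 1 = Suc (2 ^ n - 2)" by simp
    hence "X ^ (2 ^ n - 2) * X = 1" using fermat_aux[OF assms(1) False]
      by (simp add: mult.commute)
    then show ?thesis using False by (simp add: field_simps)
  qed
  define S where "S = {X::'a. inverse (X + a + b) + inverse (X + b) + inverse (X + a) + inverse X = 0}"
  have FB: "FBCT (\<lambda>X. X ^ (2 ^ n - 2)) a b = card S"
    unfolding FBCT_def S_def F ..
  show ?thesis
  proof (cases "a = b")
    case True
    have "S = UNIV" unfolding S_def True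
      by (auto simp: add.assoc xx xxy add.commute[of "inverse (X + b)" for X])
    then show ?thesis using FB True assms(1) by simp
  next
    case False
    have ab: "a + b \<noteq> 0" using False xx by (metis add_right_cancel)
    have key: "(inverse a + inverse b + inverse (a + b) = 0) \<longleftrightarrow> a*a + a*b + b*b = 0"
    proof
      assume h: "inverse a + inverse b + inverse (a + b) = 0"
      have "a * inverse a = 1" "b * inverse b = 1" "(a+b) * inverse (a+b) = 1"
        using assms(3,4) ab by simp_all
      hence "a*b*(a+b)*(inverse a + inverse b + inverse (a + b)) = (a*a + a*b + b*b) + (a*b + a*b)"
        by algebra
      then show "a*a + a*b + b*b = 0" using h xx by simp
    next
      assume h: "a*a + a*b + b*b = 0"
      have "a * inverse a = 1" "b * inverse b = 1" "(a+b) * inverse (a+b) = 1"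
        using assms(3,4) ab by simp_all
      hence "a*b*(a+b)*(inverse a + inverse b + inverse (a + b)) = (a*a + a*b + b*b) + (a*b + a*b)"
        by algebra
      hence "a*b*(a+b)*(inverse a + inverse b + inverse (a + b)) = 0" using h xx by simp
      then show "inverse a + inverse b + inverse (a + b) = 0" using assms(3,4) ab by simp
    qed
    have gen: "X \<notin> S" if "X \<notin> {0, a, b, a + b}" for X
    proof
      assume "X \<in> S"
      hence h: "inverse (X + a + b) + inverse (X + b) + inverse (X + a) + inverse X = 0"
        unfolding S_def by simp
      have nz: "X \<noteq> 0" "X + a \<noteq> 0" "X + b \<noteq> 0" "X + a + b \<noteq> 0"
        using that xx by (auto, metis add_right_cancel add.assoc xx)+
      have "X * inverse X = 1" "(X+a) * inverse (X+a) = 1" "(X+b) * inverse (X+b) = 1"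
        "(X+a+b) * inverse (X+a+b) = 1"
        using nz by simp_all
      define R where "R = 2*X^3 + 3*(a+b)*X^2 + (a*a+b*b+3*a*b)*X"
      have "X*(X+a)*(X+b)*(X+a+b)*(inverse (X + a + b) + inverse (X + b) + inverse (X + a) + inverse X)
         = a*b*(a+b) + (R + R)" unfolding R_def using \<open>X * inverse X = 1\<close> \<open>(X+a) * inverse (X+a) = 1\<close>
          \<open>(X+b) * inverse (X+b) = 1\<close> \<open>(X+a+b) * inverse (X+a+b) = 1\<close> by algebra
      hence "a * b * (a + b) = 0" using h xx by simp
      thus False using assms(3,4) ab by simp
    qed
    have sp: "X \<in> S \<longleftrightarrow> a*a + a*b + b*b = 0" if "X \<in> {0, a, b, a + b}" for X
    proof -
      have "X \<in> S \<longleftrightarrow> inverse a + inverse b + inverse (a + b) = 0"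
        using that unfolding S_def
        by (auto simp: xx xxy add.assoc add.left_commute add.commute)
      with key show ?thesis by simp
    qed
    have "S = (if a*a + a*b + b*b = 0 then {0, a, b, a + b} else {})"
      using gen sp by auto
    moreover have "card {0, a, b, a + b} = 4"
      using assms(3,4) False ab by (auto simp: xxy)
    moreover have "((a / b) ^ 2 + a / b + 1 = 0) \<longleftrightarrow> a*a + a*b + b*b = 0"
      using assms(4) by (simp add: field_simps power2_eq_square)
    ultimately show ?thesis using FB False by auto
  qed
qed

end
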